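(* Let $\mathbf{X},\mathbf{Y},\mathbf{T}_1,\mathbf{T}_2$ be random variables on finite alphabets, with the joint law $p(\mathbf{X},\mathbf{Y})$ fixed and with the Markov structure described in the context. Fix Lagrange multipliers $\beta,\lambda,\gamma$ with $\beta>0$, $\lambda>0$, $\gamma\ge 0$. Consider the functional $$\mathcal{F}[p(\mathbf{T}_1|\mathbf{X}),p(\mathbf{T}_2|\mathbf{X})] = -I(\mathbf{Y};\mathbf{T}_1,\mathbf{T}_2)+\beta I(\mathbf{T}_1;\mathbf{X})+\lambda I(\mathbf{T}_2;\mathbf{X})+\gamma I(\mathbf{T}_1;\mathbf{T}_2),$$ to be minimized over the two conditional distributions $p(\mathbf{T}_1|\mathbf{X})$ and $p(\mathbf{T}_2|\mathbf{X})$, each ranging over conditional probability distributions. Then an optimal (minimizing) pair of conditional distributions, assumed to have all the probabilities below strictly positive, satisfies the following self-consistent equations for all $x,t_1,t_2$: $$p(t_1|x)=\frac{p(t_1)}{Z_1(x)}\exp\Big\{\frac{\gamma}{\beta}D_{KL}\big[p(\mathbf{T}_2|x)\,\|\,p(\mathbf{T}_2|t_1)\big]-\frac{1}{\beta}\sum_{t_2}p(t_2|x)\,D_{KL}\big[p(\mathbf{Y}|x)\,\|\,p(\mathbf{Y}|t_1,t_2)\big]\Big\},$$ $$p(t_2|x)=\frac{p(t_2)}{Z_2(x)}\exp\Big\{\frac{\gamma}{\lambda}D_{KL}\big[p(\mathbf{T}_1|x)\,\|\,p(\mathbf{T}_1|t_2)\big]-\frac{1}{\lambda}\sum_{t_1}p(t_1|x)\,D_{KL}\big[p(\mathbf{Y}|x)\,\|\,p(\mathbf{Y}|t_1,t_2)\big]\Big\},$$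 where $Z_1(x),Z_2(x)$ are normalizing constants making the right-hand sides probability distributions in $t_1$ (resp. $t_2$).
   Context: Standing assumptions: $\mathbf{T}_1$ and $\mathbf{T}_2$ are stochastic mappings of $\mathbf{X}$, given by conditional distributions $p(\mathbf{T}_1|\mathbf{X})$, $p(\mathbf{T}_2|\mathbf{X})$; the joint law factorizes as $p(x,y,t_1,t_2)=p(x)\,p(y|x)\,p(t_1|x)\,p(t_2|x)$ (so each of $\mathbf{T}_1$, $\mathbf{T}_2$, $\mathbf{Y}$ is conditionally independent of all the other variables given $\mathbf{X}$). All marginals and conditionals ($p(t_1)$, $p(t_2)$, $p(t_2|t_1)$, $p(t_1|t_2)$, $p(y|t_1,t_2)$) are those induced by this joint law. $D_{KL}$ denotes Kullback–Leibler divergence and $I(\cdot;\cdot)$ mutual information. The functional arises as the Lagrangian of the problem: maximize $I(\mathbf{Y};\mathbf{T}_1,\mathbf{T}_2)$ subject to $I(\mathbf{X};\mathbf{T}_1)\le r_1$, $I(\mathbf{X};\mathbf{T}_2)\le r_2$, $I(\mathbf{T}_1;\mathbf{T}_2)\le\epsilon$. *)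

theory Defs
  imports Complex_Main
begin

text \<open>Finite alphabets are modelled by finite types. Probabilities are real-valued
functions; logarithms are natural (consistent with exp in the self-consistent equations),
with the convention 0 log 0 = 0.\<close>

definition cond_dist :: "('a \<Rightarrow> 'b::finite \<Rightarrow> real) \<Rightarrow> bool" where
  "cond_dist q \<longleftrightarrow> (\<forall>a. (\<forall>b. 0 \<le> q a b) \<and> (\<Sum>b\<in>UNIV. q a b) = 1)"

definition mutual_info :: "('a::finite \<Rightarrow> 'b::finite \<Rightarrow> real) \<Rightarrow> real" where
  "mutual_info J = (\<Sum>a\<in>UNIV. \<Sum>b\<in>UNIV.
      if J a b = 0 then 0
      else J a b * ln (J a b / ((\<Sum>b'\<in>UNIV. J a b') * (\<Sum>a'\<in>UNIV. J a' b))))"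

definition KL :: "('a::finite \<Rightarrow> real) \<Rightarrow> ('a \<Rightarrow> real) \<Rightarrow> real" where
  "KL p q = (\<Sum>a\<in>UNIV. if p a = 0 then 0 else p a * ln (p a / q a))"

text \<open>Quantities induced by p(x,y), p(t1|x), p(t2|x) under
p(x,y,t1,t2) = p(x) p(y|x) p(t1|x) p(t2|x).\<close>

definition px :: "('x::finite \<Rightarrow> 'y::finite \<Rightarrow> real) \<Rightarrow> 'x \<Rightarrow> real" where
  "px pxy x = (\<Sum>y\<in>UNIV. pxy x y)"

definition py_x :: "('x::finite \<Rightarrow> 'y::finite \<Rightarrow> real) \<Rightarrow> 'x \<Rightarrow> 'y \<Rightarrow> real" where
  "py_x pxy x y = pxy x y / px pxy x"

definition pt :: "('x::finite \<Rightarrow> 'y::finite \<Rightarrow> real) \<Rightarrow> ('x \<Rightarrow> 't \<Rightarrow> real) \<Rightarrow> 't \<Rightarrow> real" where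
  "pt pxy q t = (\<Sum>x\<in>UNIV. px pxy x * q x t)"

definition pt1t2 :: "('x::finite \<Rightarrow> 'y::finite \<Rightarrow> real) \<Rightarrow> ('x \<Rightarrow> 't1 \<Rightarrow> real)
    \<Rightarrow> ('x \<Rightarrow> 't2 \<Rightarrow> real) \<Rightarrow> 't1 \<Rightarrow> 't2 \<Rightarrow> real" where
  "pt1t2 pxy q1 q2 t1 t2 = (\<Sum>x\<in>UNIV. px pxy x * q1 x t1 * q2 x t2)"

definition pyt :: "('x::finite \<Rightarrow> 'y::finite \<Rightarrow> real) \<Rightarrow> ('x \<Rightarrow> 't1 \<Rightarrow> real)
    \<Rightarrow> ('x \<Rightarrow> 't2 \<Rightarrow> real) \<Rightarrow> 'y \<Rightarrow> 't1 \<times> 't2 \<Rightarrow> real" where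
  "pyt pxy q1 q2 y t = (\<Sum>x\<in>UNIV. pxy x y * q1 x (fst t) * q2 x (snd t))"

definition pt2_t1 where
  "pt2_t1 pxy q1 q2 t1 t2 = pt1t2 pxy q1 q2 t1 t2 / pt pxy q1 t1"

definition pt1_t2 where
  "pt1_t2 pxy q1 q2 t2 t1 = pt1t2 pxy q1 q2 t1 t2 / pt pxy q2 t2"

definition py_t1t2 where
  "py_t1t2 pxy q1 q2 t1 t2 y = pyt pxy q1 q2 y (t1, t2) / pt1t2 pxy q1 q2 t1 t2"

definition IB_F :: "('x::finite \<Rightarrow> 'y::finite \<Rightarrow> real) \<Rightarrow> real \<Rightarrow> real \<Rightarrow> real
    \<Rightarrow> ('x \<Rightarrow> 't1::finite \<Rightarrow> real) \<Rightarrow> ('x \<Rightarrow> 't2::finite \<Rightarrow> real) \<Rightarrow> real" where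
  "IB_F pxy beta lam gam q1 q2 =
     - mutual_info (pyt pxy q1 q2)
     + beta * mutual_info (\<lambda>x t1. px pxy x * q1 x t1)
     + lam * mutual_info (\<lambda>x t2. px pxy x * q2 x t2)
     + gam * mutual_info (pt1t2 pxy q1 q2)"

definition E1 where
  "E1 pxy beta gam q1 q2 x t1 =
     gam / beta * KL (q2 x) (pt2_t1 pxy q1 q2 t1)
     - 1 / beta * (\<Sum>t2\<in>UNIV. q2 x t2 * KL (py_x pxy x) (py_t1t2 pxy q1 q2 t1 t2))"

definition E2 where
  "E2 pxy lam gam q1 q2 x t2 =
     gam / lam * KL (q1 x) (pt1_t2 pxy q1 q2 t2)
     - 1 / lam * (\<Sum>t1\<in>UNIV. q1 x t1 * KL (py_x pxy x) (py_t1t2 pxy q1 q2 t1 t2))"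

end

theory Submission
  imports Defs
begin


lemma ev_pos:
  fixes j0 j1 :: real
  assumes "j0 > 0"
  shows "\<forall>\<^sub>F s in nhds 0. j0 + s*j1 > 0"
proof -
  have "((\<lambda>s. j0 + s*j1) \<longlongrightarrow> j0 + 0*j1) (nhds 0)"
    by (intro tendsto_add tendsto_const tendsto_mult filterlim_ident)
  then show ?thesis using assms by (auto dest: order_tendstoD(1))
qed

lemma term_deriv:
  fixes j0 j1 r0 r1 c0 c1 :: real
  assumes "0 \<le> j0" "j0 = 0 \<Longrightarrow> j1 = 0" "j0 \<le> r0" "j0 \<le> c0"
  shows "((\<lambda>s. if j0 + s*j1 = 0 then 0 else (j0+s*j1) * ln ((j0+s*j1)/((r0+s*r1)*(c0+s*c1))))
     has_real_derivative (j1 * ln (j0/(r0*c0)) + j1 - j0*r1/r0 - j0*c1/c0)) (at 0)"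
proof (cases "j0 = 0")
  case True
  then have "j1 = 0" using assms by simp
  then show ?thesis using True by simp
next
  case False
  then have j0: "j0 > 0" using assms by simp
  have r0: "r0 > 0" "c0 > 0" using j0 assms by auto
  have ev: "\<forall>\<^sub>F s in nhds 0. j0+s*j1 > 0 \<and> r0+s*r1 > 0 \<and> c0+s*c1 > 0"
    using ev_pos[OF j0, of j1] ev_pos[OF r0(1), of r1] ev_pos[OF r0(2), of c1]
    by (intro eventually_conj)
  have d: "((\<lambda>s. (j0+s*j1) * (ln(j0+s*j1) - ln(r0+s*r1) - ln(c0+s*c1))) has_real_derivative
      j1 * (ln (j0+0*j1) - ln (r0+0*r1) - ln (c0+0*c1)) + (j0+0*j1) * (j1/(j0+0*j1) - r1/(r0+0*r1) - c1/(c0+0*c1))) (at 0)"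
    using j0 r0 by (auto intro!: derivative_eq_intros)
  show ?thesis
  proof (subst DERIV_cong_ev[OF refl _ refl])
    show "\<forall>\<^sub>F s in nhds 0. (if j0 + s*j1 = 0 then 0 else (j0+s*j1) * ln ((j0+s*j1)/((r0+s*r1)*(c0+s*c1))))
       = (j0+s*j1) * (ln(j0+s*j1) - ln(r0+s*r1) - ln(c0+s*c1))"
      using ev by eventually_elim (simp add: ln_div ln_mult)
    show "DERIV (\<lambda>s. (j0+s*j1) * (ln(j0+s*j1) - ln(r0+s*r1) - ln(c0+s*c1))) 0 :> j1 * ln (j0/(r0*c0)) + j1 - j0*r1/r0 - j0*c1/c0"
      using d by (rule DERIV_cong) (use j0 r0 in \<open>simp add: ln_div ln_mult field_simps\<close>)
  qed
qed

lemma row_cancel: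
  fixes J0 J1 :: "'a::finite \<Rightarrow> 'b::finite \<Rightarrow> real"
  assumes nn: "\<And>a b. 0 \<le> J0 a b" and z: "\<And>a b. J0 a b = 0 \<Longrightarrow> J1 a b = 0"
  shows "(\<Sum>b\<in>UNIV. J0 a b * (\<Sum>b'\<in>UNIV. J1 a b') / (\<Sum>b'\<in>UNIV. J0 a b')) = (\<Sum>b\<in>UNIV. J1 a b)"
proof (cases "(\<Sum>b'\<in>UNIV. J0 a b') = 0")
  case True
  then have "\<forall>b. J0 a b = 0" using nn by (simp add: sum_nonneg_eq_0_iff)
  then show ?thesis using z by simp
next
  case False
  have "(\<Sum>b\<in>UNIV. J0 a b * (\<Sum>b'\<in>UNIV. J1 a b') / (\<Sum>b'\<in>UNIV. J0 a b'))
     = (\<Sum>b\<in>UNIV. J0 a b) * (\<Sum>b'\<in>UNIV. J1 a b') / (\<Sum>b'\<in>UNIV. J0 a b')"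
    by (simp add: sum_divide_distrib sum_distrib_right)
  then show ?thesis using False by simp
qed

lemma MI_deriv:
  fixes J0 J1 :: "'a::finite \<Rightarrow> 'b::finite \<Rightarrow> real"
  assumes nn: "\<And>a b. 0 \<le> J0 a b" and z: "\<And>a b. J0 a b = 0 \<Longrightarrow> J1 a b = 0"
  shows "((\<lambda>s. mutual_info (\<lambda>a b. J0 a b + s * J1 a b)) has_real_derivative
     (\<Sum>a\<in>UNIV. \<Sum>b\<in>UNIV. J1 a b * ln (J0 a b / ((\<Sum>b'\<in>UNIV. J0 a b') * (\<Sum>a'\<in>UNIV. J0 a' b))))
      - (\<Sum>a\<in>UNIV. \<Sum>b\<in>UNIV. J1 a b)) (at 0)"
proof -
  define R0 where "R0 a = (\<Sum>b'\<in>UNIV. J0 a b')" for a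
  define R1 where "R1 a = (\<Sum>b'\<in>UNIV. J1 a b')" for a
  define C0 where "C0 b = (\<Sum>a'\<in>UNIV. J0 a' b)" for b
  define C1 where "C1 b = (\<Sum>a'\<in>UNIV. J1 a' b)" for b
  have eq: "mutual_info (\<lambda>a b. J0 a b + s*J1 a b) = (\<Sum>a\<in>UNIV. \<Sum>b\<in>UNIV. if J0 a b + s*J1 a b = 0 then 0
      else (J0 a b + s*J1 a b) * ln ((J0 a b + s*J1 a b)/((R0 a + s*R1 a)*(C0 b + s*C1 b))))" for s
  proof -
    have "(\<Sum>b\<in>UNIV. J0 a b + s*J1 a b) = R0 a + s*R1 a" for a
      unfolding R0_def R1_def by (simp add: sum.distrib sum_distrib_left)
    moreover have "(\<Sum>a\<in>UNIV. J0 a b + s*J1 a b) = C0 b + s*C1 b" for b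
      unfolding C0_def C1_def by (simp add: sum.distrib sum_distrib_left)
    ultimately show ?thesis unfolding mutual_info_def by (simp cong: if_cong)
  qed
  have D: "((\<lambda>s. (\<Sum>a\<in>UNIV. \<Sum>b\<in>UNIV. if J0 a b + s*J1 a b = 0 then 0
      else (J0 a b + s*J1 a b) * ln ((J0 a b + s*J1 a b)/((R0 a + s*R1 a)*(C0 b + s*C1 b))))) has_real_derivative
      (\<Sum>a\<in>UNIV. \<Sum>b\<in>UNIV. J1 a b * ln (J0 a b/(R0 a*C0 b)) + J1 a b - J0 a b*R1 a/R0 a - J0 a b*C1 b/C0 b)) (at 0)"
  proof (intro DERIV_sum term_deriv)
    fix a b
    show "0 \<le> J0 a b" by (rule nn)
    show "J0 a b = 0 \<Longrightarrow> J1 a b = 0" by (rule z)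
    show "J0 a b \<le> R0 a" unfolding R0_def by (rule member_le_sum) (auto intro: nn)
    show "J0 a b \<le> C0 b" unfolding C0_def by (rule member_le_sum) (auto intro: nn)
  qed
  have s1: "(\<Sum>a\<in>UNIV. \<Sum>b\<in>UNIV. J0 a b*R1 a/R0 a) = (\<Sum>a\<in>UNIV. \<Sum>b\<in>UNIV. J1 a b)"
    unfolding R0_def R1_def by (rule sum.cong[OF refl], rule row_cancel[OF nn z])
  have s2: "(\<Sum>a\<in>UNIV. \<Sum>b\<in>UNIV. J0 a b*C1 b/C0 b) = (\<Sum>a\<in>UNIV. \<Sum>b\<in>UNIV. J1 a b)"
  proof -
    have "(\<Sum>a\<in>UNIV. \<Sum>b\<in>UNIV. J0 a b*C1 b/C0 b) = (\<Sum>b\<in>UNIV. \<Sum>a\<in>UNIV. J0 a b*C1 b/C0 b)"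
      by (rule sum.swap)
    also have "\<dots> = (\<Sum>b\<in>UNIV. \<Sum>a\<in>UNIV. J1 a b)"
      unfolding C0_def C1_def by (rule sum.cong[OF refl], rule row_cancel[of "\<lambda>b a. J0 a b" "\<lambda>b a. J1 a b"]) (use nn z in auto)
    also have "\<dots> = (\<Sum>a\<in>UNIV. \<Sum>b\<in>UNIV. J1 a b)" by (rule sum.swap)
    finally show ?thesis .
  qed
  have "(\<Sum>a\<in>UNIV. \<Sum>b\<in>UNIV. J1 a b * ln (J0 a b/(R0 a*C0 b)) + J1 a b - J0 a b*R1 a/R0 a - J0 a b*C1 b/C0 b)
     = (\<Sum>a\<in>UNIV. \<Sum>b\<in>UNIV. J1 a b * ln (J0 a b/(R0 a*C0 b))) + (\<Sum>a\<in>UNIV. \<Sum>b\<in>UNIV. J1 a b)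
       - (\<Sum>a\<in>UNIV. \<Sum>b\<in>UNIV. J0 a b*R1 a/R0 a) - (\<Sum>a\<in>UNIV. \<Sum>b\<in>UNIV. J0 a b*C1 b/C0 b)"
    by (simp add: sum.distrib sum_subtractf)
  also have "\<dots> = (\<Sum>a\<in>UNIV. \<Sum>b\<in>UNIV. J1 a b * ln (J0 a b/(R0 a*C0 b))) - (\<Sum>a\<in>UNIV. \<Sum>b\<in>UNIV. J1 a b)"
    unfolding s1 s2 by simp
  finally have V: "(\<Sum>a\<in>UNIV. \<Sum>b\<in>UNIV. J1 a b * ln (J0 a b/(R0 a*C0 b)) + J1 a b - J0 a b*R1 a/R0 a - J0 a b*C1 b/C0 b)
     = (\<Sum>a\<in>UNIV. \<Sum>b\<in>UNIV. J1 a b * ln (J0 a b/(R0 a*C0 b))) - (\<Sum>a\<in>UNIV. \<Sum>b\<in>UNIV. J1 a b)" .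
  show ?thesis using D[unfolded V] unfolding eq[abs_def] R0_def C0_def .
qed

definition ee :: "'a \<Rightarrow> 'a \<Rightarrow> 'a \<Rightarrow> real" where
  "ee a b t = (if t = a then 1 else 0) - (if t = b then 1 else 0)"

lemma sum_ee: "(\<Sum>t\<in>(UNIV::'a::finite set). ee a b t * f t) = f a - f b"
proof -
  have "(\<Sum>t\<in>(UNIV::'a set). ee a b t * f t) = (\<Sum>t\<in>UNIV. (if t = a then f t else 0)) - (\<Sum>t\<in>UNIV. (if t = b then f t else 0))"
    unfolding ee_def by (simp add: left_diff_distrib sum_subtractf of_bool_def[symmetric])
  then show ?thesis by simp
qed

lemma sum_ee0: "(\<Sum>t\<in>(UNIV::'a::finite set). ee a b t) = 0"
  using sum_ee[of a b "\<lambda>_. 1"] by simp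

lemma sum_pair: "(\<Sum>t\<in>(UNIV::('a::finite \<times> 'b::finite) set). f t) = (\<Sum>t1\<in>UNIV. \<Sum>t2\<in>UNIV. f (t1,t2))"
  by (simp add: sum.cartesian_product flip: UNIV_Times_UNIV)

definition LA where
  "LA pxy q1 q2 y t = ln (pyt pxy q1 q2 y t / ((\<Sum>t'\<in>UNIV. pyt pxy q1 q2 y t') * (\<Sum>y'\<in>UNIV. pyt pxy q1 q2 y' t)))"
definition LB where
  "LB pxy q1 x t = ln (px pxy x * q1 x t / ((\<Sum>t'\<in>UNIV. px pxy x * q1 x t') * (\<Sum>x'\<in>UNIV. px pxy x' * q1 x' t)))"
definition LC where
  "LC pxy q1 q2 t1 t2 = ln (pt1t2 pxy q1 q2 t1 t2 / ((\<Sum>t2'\<in>UNIV. pt1t2 pxy q1 q2 t1 t2') * (\<Sum>t1'\<in>UNIV. pt1t2 pxy q1 q2 t1' t2)))"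

definition HH where
  "HH pxy beta gam q1 q2 x t1 =
     - (\<Sum>y\<in>UNIV. \<Sum>t2\<in>UNIV. pxy x y * q2 x t2 * LA pxy q1 q2 y (t1,t2))
     + beta * (px pxy x * LB pxy q1 x t1)
     + gam * (\<Sum>t2\<in>UNIV. px pxy x * q2 x t2 * LC pxy q1 q2 t1 t2)"

lemma stat:
  fixes pxy :: "'x::finite \<Rightarrow> 'y::finite \<Rightarrow> real"
    and q1 :: "'x \<Rightarrow> 't1::finite \<Rightarrow> real"
    and q2 :: "'x \<Rightarrow> 't2::finite \<Rightarrow> real"
    and beta lam gam :: real
  assumes pxy_nonneg: "\<forall>x y. 0 \<le> pxy x y"
    and q1_cd: "cond_dist q1"
    and optimal: "\<forall>r1. cond_dist (r1 :: 'x \<Rightarrow> 't1 \<Rightarrow> real)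
                     \<longrightarrow> IB_F pxy beta lam gam q1 q2 \<le> IB_F pxy beta lam gam r1 q2"
    and px_pos: "\<forall>x. px pxy x > 0"
    and q1_pos: "\<forall>x t1. q1 x t1 > 0"
    and q2_pos: "\<forall>x t2. q2 x t2 > 0"
  shows "HH pxy beta gam q1 q2 x0 a = HH pxy beta gam q1 q2 x0 b"
proof -
  define r where "r s = (\<lambda>x t. q1 x t + s * (if x = x0 then ee a b t else 0))" for s :: real
  define A1 where "A1 y t = pxy x0 y * ee a b (fst t) * q2 x0 (snd t)" for y t
  define B1 where "B1 x t = (if x = x0 then px pxy x0 * ee a b t else 0)" for x t
  define C1 where "C1 t1 t2 = px pxy x0 * ee a b t1 * q2 x0 t2" for t1 t2
  have rA: "pyt pxy (r s) q2 = (\<lambda>y t. pyt pxy q1 q2 y t + s * A1 y t)" for s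
  proof (intro ext)
    fix y t
    have "pyt pxy (r s) q2 y t = (\<Sum>x\<in>UNIV. pxy x y * q1 x (fst t) * q2 x (snd t)
        + (if x = x0 then s * (pxy x0 y * ee a b (fst t) * q2 x0 (snd t)) else 0))"
      unfolding pyt_def r_def by (intro sum.cong refl) (auto simp: algebra_simps)
    also have "\<dots> = (\<Sum>x\<in>UNIV. pxy x y * q1 x (fst t) * q2 x (snd t))
        + (\<Sum>x\<in>UNIV. if x = x0 then s * (pxy x0 y * ee a b (fst t) * q2 x0 (snd t)) else 0)"
      by (rule sum.distrib)
    finally have "pyt pxy (r s) q2 y t = (\<Sum>x\<in>UNIV. pxy x y * q1 x (fst t) * q2 x (snd t))
        + (\<Sum>x\<in>UNIV. if x = x0 then s * (pxy x0 y * ee a b (fst t) * q2 x0 (snd t)) else 0)" .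
    then show "pyt pxy (r s) q2 y t = pyt pxy q1 q2 y t + s * A1 y t"
      unfolding A1_def pyt_def by simp
  qed
  have rB: "(\<lambda>x t. px pxy x * r s x t) = (\<lambda>x t. px pxy x * q1 x t + s * B1 x t)" for s
    unfolding r_def B1_def by (intro ext) (auto simp: algebra_simps)
  have rC: "pt1t2 pxy (r s) q2 = (\<lambda>t1 t2. pt1t2 pxy q1 q2 t1 t2 + s * C1 t1 t2)" for s
  proof (intro ext)
    fix t1 t2
    have "pt1t2 pxy (r s) q2 t1 t2 = (\<Sum>x\<in>UNIV. px pxy x * q1 x t1 * q2 x t2
        + (if x = x0 then s * (px pxy x0 * ee a b t1 * q2 x0 t2) else 0))"
      unfolding pt1t2_def r_def by (intro sum.cong refl) (auto simp: algebra_simps)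
    also have "\<dots> = (\<Sum>x\<in>UNIV. px pxy x * q1 x t1 * q2 x t2)
        + (\<Sum>x\<in>UNIV. if x = x0 then s * (px pxy x0 * ee a b t1 * q2 x0 t2) else 0)"
      by (rule sum.distrib)
    finally have "pt1t2 pxy (r s) q2 t1 t2 = (\<Sum>x\<in>UNIV. px pxy x * q1 x t1 * q2 x t2)
        + (\<Sum>x\<in>UNIV. if x = x0 then s * (px pxy x0 * ee a b t1 * q2 x0 t2) else 0)" .
    then show "pt1t2 pxy (r s) q2 t1 t2 = pt1t2 pxy q1 q2 t1 t2 + s * C1 t1 t2"
      unfolding C1_def pt1t2_def by simp
  qed
  have g: "IB_F pxy beta lam gam (r s) q2 =
      - mutual_info (\<lambda>y t. pyt pxy q1 q2 y t + s * A1 y t)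
      + beta * mutual_info (\<lambda>x t. px pxy x * q1 x t + s * B1 x t)
      + lam * mutual_info (\<lambda>x t2. px pxy x * q2 x t2)
      + gam * mutual_info (\<lambda>t1 t2. pt1t2 pxy q1 q2 t1 t2 + s * C1 t1 t2)" for s
    unfolding IB_F_def rA rB rC ..
  have pyt_nn: "0 \<le> pyt pxy q1 q2 y t" for y t
    unfolding pyt_def using pxy_nonneg q1_pos q2_pos by (auto intro!: sum_nonneg mult_nonneg_nonneg simp: less_imp_le)
  have A1z: "A1 y t = 0" if "pyt pxy q1 q2 y t = 0" for y t
  proof -
    have "pxy x0 y * q1 x0 (fst t) * q2 x0 (snd t) \<le> pyt pxy q1 q2 y t"
      unfolding pyt_def using pxy_nonneg q1_pos q2_pos by (intro member_le_sum) (auto intro!: mult_nonneg_nonneg simp: less_imp_le)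
    then have "pxy x0 y * q1 x0 (fst t) * q2 x0 (snd t) = 0" using that pxy_nonneg q1_pos q2_pos
      by (metis antisym less_imp_le mult_nonneg_nonneg)
    then have "pxy x0 y = 0" using q1_pos q2_pos by (metis less_irrefl mult_eq_0_iff)
    then show ?thesis unfolding A1_def by simp
  qed
  have B0_pos: "0 < px pxy x * q1 x t" for x t using px_pos q1_pos by simp
  have C0_pos: "0 < pt1t2 pxy q1 q2 t1 t2" for t1 t2
  proof -
    have "px pxy x0 * q1 x0 t1 * q2 x0 t2 \<le> pt1t2 pxy q1 q2 t1 t2"
      unfolding pt1t2_def using px_pos q1_pos q2_pos by (intro member_le_sum) (auto intro!: mult_nonneg_nonneg simp: less_imp_le)
    moreover have "0 < px pxy x0 * q1 x0 t1 * q2 x0 t2" using px_pos q1_pos q2_pos by simp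
    ultimately show ?thesis by linarith
  qed
  define SA where "SA t1 = (\<Sum>y\<in>UNIV. \<Sum>t2\<in>UNIV. pxy x0 y * q2 x0 t2 * LA pxy q1 q2 y (t1,t2))" for t1
  define SC where "SC t1 = (\<Sum>t2\<in>UNIV. px pxy x0 * q2 x0 t2 * LC pxy q1 q2 t1 t2)" for t1
  have dA: "((\<lambda>s. mutual_info (\<lambda>y t. pyt pxy q1 q2 y t + s * A1 y t)) has_real_derivative
     (\<Sum>y\<in>UNIV. \<Sum>t\<in>UNIV. A1 y t * LA pxy q1 q2 y t) - (\<Sum>y\<in>UNIV. \<Sum>t\<in>UNIV. A1 y t)) (at 0)"
    unfolding LA_def by (rule MI_deriv) (use pyt_nn A1z in auto)
  have A1s: "(\<Sum>y\<in>UNIV. \<Sum>t\<in>UNIV. A1 y t * g y t) = (\<Sum>y\<in>UNIV. \<Sum>t2\<in>UNIV. pxy x0 y * q2 x0 t2 * g y (a,t2))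
      - (\<Sum>y\<in>UNIV. \<Sum>t2\<in>UNIV. pxy x0 y * q2 x0 t2 * g y (b,t2))" for g
  proof -
    have "(\<Sum>y\<in>UNIV. \<Sum>t\<in>UNIV. A1 y t * g y t) =
        (\<Sum>y\<in>UNIV. \<Sum>t1\<in>UNIV. ee a b t1 * (\<Sum>t2\<in>UNIV. pxy x0 y * q2 x0 t2 * g y (t1,t2)))"
      unfolding sum_pair A1_def by (simp add: sum_distrib_left mult_ac)
    also have "\<dots> = (\<Sum>y\<in>UNIV. (\<Sum>t2\<in>UNIV. pxy x0 y * q2 x0 t2 * g y (a,t2)) - (\<Sum>t2\<in>UNIV. pxy x0 y * q2 x0 t2 * g y (b,t2)))"
      by (simp only: sum_ee)
    finally show ?thesis by (simp add: sum_subtractf)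
  qed
  have DA: "(\<Sum>y\<in>UNIV. \<Sum>t\<in>UNIV. A1 y t * LA pxy q1 q2 y t) - (\<Sum>y\<in>UNIV. \<Sum>t\<in>UNIV. A1 y t) = SA a - SA b"
    using A1s[of "LA pxy q1 q2"] A1s[of "\<lambda>_ _. 1"] unfolding SA_def by simp
  have dB: "((\<lambda>s. mutual_info (\<lambda>x t. px pxy x * q1 x t + s * B1 x t)) has_real_derivative
     (\<Sum>x\<in>UNIV. \<Sum>t\<in>UNIV. B1 x t * LB pxy q1 x t) - (\<Sum>x\<in>UNIV. \<Sum>t\<in>UNIV. B1 x t)) (at 0)"
    unfolding LB_def by (rule MI_deriv) (metis B0_pos less_imp_le, metis B0_pos less_irrefl)
  have B1s: "(\<Sum>x\<in>UNIV. \<Sum>t\<in>UNIV. B1 x t * g x t) = px pxy x0 * (g x0 a - g x0 b)" for g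
  proof -
    have "(\<Sum>x\<in>UNIV. \<Sum>t\<in>UNIV. B1 x t * g x t) = (\<Sum>x\<in>UNIV. if x = x0 then (\<Sum>t\<in>UNIV. px pxy x0 * (ee a b t * g x0 t)) else 0)"
      unfolding B1_def by (intro sum.cong refl) (auto simp: mult_ac)
    also have "\<dots> = px pxy x0 * (\<Sum>t\<in>UNIV. ee a b t * g x0 t)" by (simp add: sum_distrib_left)
    finally show ?thesis by (simp only: sum_ee)
  qed
  have DB: "(\<Sum>x\<in>UNIV. \<Sum>t\<in>UNIV. B1 x t * LB pxy q1 x t) - (\<Sum>x\<in>UNIV. \<Sum>t\<in>UNIV. B1 x t)
      = px pxy x0 * (LB pxy q1 x0 a - LB pxy q1 x0 b)"
    using B1s[of "LB pxy q1"] B1s[of "\<lambda>_ _. 1"] by simp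
  have dC: "((\<lambda>s. mutual_info (\<lambda>t1 t2. pt1t2 pxy q1 q2 t1 t2 + s * C1 t1 t2)) has_real_derivative
     (\<Sum>t1\<in>UNIV. \<Sum>t2\<in>UNIV. C1 t1 t2 * LC pxy q1 q2 t1 t2) - (\<Sum>t1\<in>UNIV. \<Sum>t2\<in>UNIV. C1 t1 t2)) (at 0)"
    unfolding LC_def by (rule MI_deriv) (metis C0_pos less_imp_le, metis C0_pos less_irrefl)
  have C1s: "(\<Sum>t1\<in>UNIV. \<Sum>t2\<in>UNIV. C1 t1 t2 * g t1 t2) = (\<Sum>t2\<in>UNIV. px pxy x0 * q2 x0 t2 * g a t2)
      - (\<Sum>t2\<in>UNIV. px pxy x0 * q2 x0 t2 * g b t2)" for g
  proof -
    have "(\<Sum>t1\<in>UNIV. \<Sum>t2\<in>UNIV. C1 t1 t2 * g t1 t2) = (\<Sum>t1\<in>UNIV. ee a b t1 * (\<Sum>t2\<in>UNIV. px pxy x0 * q2 x0 t2 * g t1 t2))"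
      unfolding C1_def by (simp add: sum_distrib_left mult_ac)
    then show ?thesis by (simp only: sum_ee)
  qed
  have DC: "(\<Sum>t1\<in>UNIV. \<Sum>t2\<in>UNIV. C1 t1 t2 * LC pxy q1 q2 t1 t2) - (\<Sum>t1\<in>UNIV. \<Sum>t2\<in>UNIV. C1 t1 t2) = SC a - SC b"
    using C1s[of "LC pxy q1 q2"] C1s[of "\<lambda>_ _. 1"] unfolding SC_def by simp
  have dg: "((\<lambda>s. IB_F pxy beta lam gam (r s) q2) has_real_derivative
      - (SA a - SA b) + beta * (px pxy x0 * (LB pxy q1 x0 a - LB pxy q1 x0 b)) + 0 + gam * (SC a - SC b)) (at 0)"
    unfolding g by (intro DERIV_add DERIV_minus DERIV_cmult DERIV_const dA[unfolded DA] dB[unfolded DB] dC[unfolded DC])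
  define \<delta> where "\<delta> = min (q1 x0 a) (q1 x0 b)"
  have \<delta>: "\<delta> > 0" unfolding \<delta>_def using q1_pos by simp
  have r0: "r 0 = q1" unfolding r_def by simp
  have rcd: "cond_dist (r s)" if "\<bar>s\<bar> < \<delta>" for s
    unfolding cond_dist_def
  proof (intro allI conjI)
    fix x t
    show "0 \<le> r s x t"
      using that q1_pos[rule_format, of x t] unfolding r_def ee_def \<delta>_def
      by (cases "x = x0"; cases "t = a"; cases "t = b") auto
    show "(\<Sum>t\<in>UNIV. r s x t) = 1"
    proof -
      have "(\<Sum>t\<in>UNIV. r s x t) = (\<Sum>t\<in>UNIV. q1 x t) + s * (if x = x0 then (\<Sum>t\<in>UNIV. ee a b t) else 0)"
        unfolding r_def by (simp add: sum.distrib sum_distrib_left)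
      then show ?thesis using q1_cd unfolding cond_dist_def sum_ee0 by simp
    qed
  qed
  have "- (SA a - SA b) + beta * (px pxy x0 * (LB pxy q1 x0 a - LB pxy q1 x0 b)) + 0 + gam * (SC a - SC b) = 0"
  proof (rule DERIV_local_min[OF dg \<delta>], intro allI impI)
    fix s :: real assume "\<bar>0 - s\<bar> < \<delta>"
    then show "IB_F pxy beta lam gam (r 0) q2 \<le> IB_F pxy beta lam gam (r s) q2"
      using optimal rcd[of s] unfolding r0 by simp
  qed
  then show ?thesis unfolding HH_def SA_def SC_def by (simp add: algebra_simps)
qed



lemma HH_E1:
  fixes pxy :: "'x::finite \<Rightarrow> 'y::finite \<Rightarrow> real"
    and q1 :: "'x \<Rightarrow> 't1::finite \<Rightarrow> real"
    and q2 :: "'x \<Rightarrow> 't2::finite \<Rightarrow> real"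
  assumes pxy_nonneg: "\<forall>x y. 0 \<le> pxy x y"
    and beta_pos: "beta > 0"
    and q1_cd: "cond_dist q1" and q2_cd: "cond_dist q2"
    and px_pos: "\<forall>x. px pxy x > 0"
    and q1_pos: "\<forall>x t1. q1 x t1 > 0"
    and q2_pos: "\<forall>x t2. q2 x t2 > 0"
  shows "HH pxy beta gam q1 q2 x t1 = beta * px pxy x * (ln (q1 x t1) - ln (pt pxy q1 t1))
      - px pxy x * (beta * E1 pxy beta gam q1 q2 x t1)
      + gam * (\<Sum>t2\<in>UNIV. px pxy x * q2 x t2 * (ln (q2 x t2) - ln (pt pxy q2 t2)))
      - (\<Sum>y\<in>UNIV. if pxy x y = 0 then 0 else pxy x y * (ln (py_x pxy x y) - ln (\<Sum>t'\<in>UNIV. pyt pxy q1 q2 y t')))"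
proof -
  have q1s: "(\<Sum>t\<in>UNIV. q1 x t) = 1" for x using q1_cd unfolding cond_dist_def by simp
  have q2s: "(\<Sum>t\<in>UNIV. q2 x t) = 1" for x using q2_cd unfolding cond_dist_def by simp
  have pt1_pos: "pt pxy q1 t > 0" for t
  proof -
    have "px pxy x * q1 x t \<le> pt pxy q1 t" unfolding pt_def using px_pos q1_pos
      by (intro member_le_sum) (auto intro!: mult_nonneg_nonneg simp: less_imp_le)
    moreover have "px pxy x * q1 x t > 0" using px_pos q1_pos by simp
    ultimately show ?thesis by linarith
  qed
  have pt2_pos: "pt pxy q2 t > 0" for t
  proof -
    have "px pxy x * q2 x t \<le> pt pxy q2 t" unfolding pt_def using px_pos q2_pos
      by (intro member_le_sum) (auto intro!: mult_nonneg_nonneg simp: less_imp_le)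
    moreover have "px pxy x * q2 x t > 0" using px_pos q2_pos by simp
    ultimately show ?thesis by linarith
  qed
  have p12_pos: "pt1t2 pxy q1 q2 t1 t2 > 0" for t1 t2
  proof -
    have "px pxy x * q1 x t1 * q2 x t2 \<le> pt1t2 pxy q1 q2 t1 t2" unfolding pt1t2_def using px_pos q1_pos q2_pos
      by (intro member_le_sum) (auto intro!: mult_nonneg_nonneg simp: less_imp_le)
    moreover have "px pxy x * q1 x t1 * q2 x t2 > 0" using px_pos q1_pos q2_pos by simp
    ultimately show ?thesis by linarith
  qed
  have LBv: "LB pxy q1 x t1 = ln (q1 x t1) - ln (pt pxy q1 t1)"
  proof -
    have "(\<Sum>t'\<in>UNIV. px pxy x * q1 x t') = px pxy x" by (simp add: q1s flip: sum_distrib_left)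
    moreover have "(\<Sum>x'\<in>UNIV. px pxy x' * q1 x' t1) = pt pxy q1 t1" unfolding pt_def ..
    ultimately have "LB pxy q1 x t1 = ln (q1 x t1 / pt pxy q1 t1)" unfolding LB_def
      using px_pos[rule_format, of x] by simp
    then show ?thesis using q1_pos[rule_format, of x t1] pt1_pos[of t1] by (simp add: ln_div)
  qed
  have row12: "(\<Sum>t2'\<in>UNIV. pt1t2 pxy q1 q2 t1' t2') = pt pxy q1 t1'" for t1'
  proof -
    have "(\<Sum>t2'\<in>UNIV. pt1t2 pxy q1 q2 t1' t2') = (\<Sum>x\<in>UNIV. px pxy x * q1 x t1' * (\<Sum>t2'\<in>UNIV. q2 x t2'))"
      unfolding pt1t2_def by (subst sum.swap) (simp add: sum_distrib_left)
    then show ?thesis unfolding pt_def q2s by simp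
  qed
  have col12: "(\<Sum>t1'\<in>UNIV. pt1t2 pxy q1 q2 t1' t2') = pt pxy q2 t2'" for t2'
  proof -
    have "(\<Sum>t1'\<in>UNIV. pt1t2 pxy q1 q2 t1' t2') = (\<Sum>x\<in>UNIV. px pxy x * q2 x t2' * (\<Sum>t1'\<in>UNIV. q1 x t1'))"
      unfolding pt1t2_def by (subst sum.swap) (simp add: sum_distrib_left mult_ac)
    then show ?thesis unfolding pt_def q1s by simp
  qed
  have LCv: "LC pxy q1 q2 t1 t2 = ln (pt1t2 pxy q1 q2 t1 t2) - ln (pt pxy q1 t1) - ln (pt pxy q2 t2)" for t2
    unfolding LC_def row12 col12 using p12_pos[of t1 t2] pt1_pos[of t1] pt2_pos[of t2] by (simp add: ln_div ln_mult)
  have colY: "(\<Sum>y'\<in>UNIV. pyt pxy q1 q2 y' (t1,t2)) = pt1t2 pxy q1 q2 t1 t2" for t2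
    unfolding pyt_def pt1t2_def px_def by (subst sum.swap) (simp add: sum_distrib_right)
  define Ry where "Ry y = (\<Sum>t'\<in>UNIV. pyt pxy q1 q2 y t')" for y
  define cy where "cy y = (if pxy x y = 0 then 0 else pxy x y * (ln (py_x pxy x y) - ln (Ry y)))" for y
  have e1: "beta * E1 pxy beta gam q1 q2 x t1 = gam * KL (q2 x) (pt2_t1 pxy q1 q2 t1)
      - (\<Sum>t2\<in>UNIV. q2 x t2 * KL (py_x pxy x) (py_t1t2 pxy q1 q2 t1 t2))"
    unfolding E1_def using beta_pos by (simp add: field_simps)
  have kl2: "px pxy x * KL (q2 x) (pt2_t1 pxy q1 q2 t1) =
      (\<Sum>t2\<in>UNIV. px pxy x * q2 x t2 * (ln (q2 x t2) - ln (pt1t2 pxy q1 q2 t1 t2) + ln (pt pxy q1 t1)))"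
    unfolding KL_def sum_distrib_left
  proof (intro sum.cong refl)
    fix t2
    show "px pxy x * (if q2 x t2 = 0 then 0 else q2 x t2 * ln (q2 x t2 / pt2_t1 pxy q1 q2 t1 t2)) =
      px pxy x * q2 x t2 * (ln (q2 x t2) - ln (pt1t2 pxy q1 q2 t1 t2) + ln (pt pxy q1 t1))"
      unfolding pt2_t1_def using q2_pos[rule_format, of x t2] p12_pos[of t1 t2] pt1_pos[of t1]
      by (simp add: ln_div ln_mult)
  qed
  have term_y: "px pxy x * (q2 x t2 * (if py_x pxy x y = 0 then 0 else py_x pxy x y * ln (py_x pxy x y / py_t1t2 pxy q1 q2 t1 t2 y)))
      = q2 x t2 * cy y - pxy x y * q2 x t2 * LA pxy q1 q2 y (t1,t2)" for y t2
  proof (cases "pxy x y = 0")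
    case True
    then show ?thesis unfolding cy_def py_x_def by simp
  next
    case False
    then have pxy_pos: "pxy x y > 0" using pxy_nonneg by (simp add: order_less_le)
    have pyx: "py_x pxy x y > 0" unfolding py_x_def using pxy_pos px_pos by simp
    have pyt_pos: "pyt pxy q1 q2 y (t1,t2) > 0"
    proof -
      have "pxy x y * q1 x t1 * q2 x t2 \<le> pyt pxy q1 q2 y (t1,t2)" unfolding pyt_def prod.sel using pxy_nonneg q1_pos q2_pos
        by (intro member_le_sum) (auto intro!: mult_nonneg_nonneg simp: less_imp_le)
      moreover have "pxy x y * q1 x t1 * q2 x t2 > 0" using pxy_pos q1_pos q2_pos by simp
      ultimately show ?thesis by linarith
    qed
    have Ry_pos: "Ry y > 0"
    proof -
      have "pyt pxy q1 q2 y (t1,t2) \<le> Ry y" unfolding Ry_def using pxy_nonneg q1_pos q2_pos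
        by (intro member_le_sum) (auto simp: pyt_def intro!: sum_nonneg mult_nonneg_nonneg simp: less_imp_le)
      then show ?thesis using pyt_pos by linarith
    qed
    have LAv: "LA pxy q1 q2 y (t1,t2) = ln (pyt pxy q1 q2 y (t1,t2)) - ln (Ry y) - ln (pt1t2 pxy q1 q2 t1 t2)"
      unfolding LA_def colY Ry_def[symmetric] using pyt_pos Ry_pos p12_pos[of t1 t2] by (simp add: ln_div ln_mult)
    have lnE: "ln (py_x pxy x y / py_t1t2 pxy q1 q2 t1 t2 y) = ln (py_x pxy x y) - ln (pyt pxy q1 q2 y (t1,t2)) + ln (pt1t2 pxy q1 q2 t1 t2)"
      unfolding py_t1t2_def using pyx pyt_pos p12_pos[of t1 t2] by (simp add: ln_div ln_mult)
    have pp: "px pxy x * py_x pxy x y = pxy x y" unfolding py_x_def using px_pos[rule_format, of x] by simp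
    have "px pxy x * (q2 x t2 * (if py_x pxy x y = 0 then 0 else py_x pxy x y * ln (py_x pxy x y / py_t1t2 pxy q1 q2 t1 t2 y)))
      = q2 x t2 * pxy x y * ln (py_x pxy x y / py_t1t2 pxy q1 q2 t1 t2 y)"
      using pyx by (simp add: mult_ac flip: pp)
    then show ?thesis unfolding cy_def LAv lnE using False
      by (simp add: algebra_simps)
  qed
  have kly: "px pxy x * (\<Sum>t2\<in>UNIV. q2 x t2 * KL (py_x pxy x) (py_t1t2 pxy q1 q2 t1 t2))
      = (\<Sum>y\<in>UNIV. cy y) - (\<Sum>y\<in>UNIV. \<Sum>t2\<in>UNIV. pxy x y * q2 x t2 * LA pxy q1 q2 y (t1,t2))"
  proof -
    have h1: "px pxy x * (\<Sum>t2\<in>UNIV. q2 x t2 * KL (py_x pxy x) (py_t1t2 pxy q1 q2 t1 t2))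
       = (\<Sum>t2\<in>UNIV. \<Sum>y\<in>UNIV. q2 x t2 * cy y - pxy x y * q2 x t2 * LA pxy q1 q2 y (t1,t2))"
      unfolding KL_def sum_distrib_left term_y[symmetric] ..
    have h2: "(\<Sum>t2\<in>UNIV. \<Sum>y\<in>UNIV. q2 x t2 * cy y - pxy x y * q2 x t2 * LA pxy q1 q2 y (t1,t2))
       = (\<Sum>t2\<in>UNIV. \<Sum>y\<in>UNIV. q2 x t2 * cy y) - (\<Sum>t2\<in>UNIV. \<Sum>y\<in>UNIV. pxy x y * q2 x t2 * LA pxy q1 q2 y (t1,t2))"
      by (simp only: sum_subtractf)
    have "(\<Sum>t2\<in>UNIV. \<Sum>y\<in>UNIV. q2 x t2 * cy y) = (\<Sum>t2\<in>UNIV. q2 x t2 * (\<Sum>y\<in>UNIV. cy y))"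
      by (simp only: sum_distrib_left)
    also have "\<dots> = (\<Sum>t2\<in>UNIV. q2 x t2) * (\<Sum>y\<in>UNIV. cy y)"
      by (rule sum_distrib_right[symmetric])
    finally have h3: "(\<Sum>t2\<in>UNIV. \<Sum>y\<in>UNIV. q2 x t2 * cy y) = (\<Sum>y\<in>UNIV. cy y)" unfolding q2s by simp
    have h4: "(\<Sum>t2\<in>UNIV. \<Sum>y\<in>UNIV. pxy x y * q2 x t2 * LA pxy q1 q2 y (t1,t2))
        = (\<Sum>y\<in>UNIV. \<Sum>t2\<in>UNIV. pxy x y * q2 x t2 * LA pxy q1 q2 y (t1,t2))"
      by (rule sum.swap)
    show ?thesis unfolding h1 h2 h3 h4 ..
  qed
  have gsum: "(\<Sum>t2\<in>UNIV. px pxy x * q2 x t2 * LC pxy q1 q2 t1 t2)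
      + (\<Sum>t2\<in>UNIV. px pxy x * q2 x t2 * (ln (q2 x t2) - ln (pt1t2 pxy q1 q2 t1 t2) + ln (pt pxy q1 t1)))
      = (\<Sum>t2\<in>UNIV. px pxy x * q2 x t2 * (ln (q2 x t2) - ln (pt pxy q2 t2)))"
    unfolding sum.distrib[symmetric] LCv by (intro sum.cong refl) (simp add: algebra_simps)
  have HHv: "HH pxy beta gam q1 q2 x t1 =
     - (\<Sum>y\<in>UNIV. \<Sum>t2\<in>UNIV. pxy x y * q2 x t2 * LA pxy q1 q2 y (t1,t2))
     + beta * (px pxy x * (ln (q1 x t1) - ln (pt pxy q1 t1)))
     + gam * (\<Sum>t2\<in>UNIV. px pxy x * q2 x t2 * LC pxy q1 q2 t1 t2)"
    unfolding HH_def LBv ..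
  have "px pxy x * (beta * E1 pxy beta gam q1 q2 x t1) = gam * (px pxy x * KL (q2 x) (pt2_t1 pxy q1 q2 t1))
      - px pxy x * (\<Sum>t2\<in>UNIV. q2 x t2 * KL (py_x pxy x) (py_t1t2 pxy q1 q2 t1 t2))"
    unfolding e1 by (simp add: algebra_simps)
  then have PE: "px pxy x * (beta * E1 pxy beta gam q1 q2 x t1) =
      gam * (\<Sum>t2\<in>UNIV. px pxy x * q2 x t2 * (ln (q2 x t2) - ln (pt1t2 pxy q1 q2 t1 t2) + ln (pt pxy q1 t1)))
      - ((\<Sum>y\<in>UNIV. cy y) - (\<Sum>y\<in>UNIV. \<Sum>t2\<in>UNIV. pxy x y * q2 x t2 * LA pxy q1 q2 y (t1,t2)))"
    unfolding kl2 kly .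
  have cyv: "(\<Sum>y\<in>UNIV. cy y) = (\<Sum>y\<in>UNIV. if pxy x y = 0 then 0 else pxy x y * (ln (py_x pxy x y) - ln (\<Sum>t'\<in>UNIV. pyt pxy q1 q2 y t')))"
    unfolding cy_def Ry_def ..
  show ?thesis unfolding HHv PE cyv[symmetric] gsum[symmetric]
    by (simp add: ring_distribs mult.assoc)
qed


lemma half:
  fixes pxy :: "'x::finite \<Rightarrow> 'y::finite \<Rightarrow> real"
    and q1 :: "'x \<Rightarrow> 't1::finite \<Rightarrow> real"
    and q2 :: "'x \<Rightarrow> 't2::finite \<Rightarrow> real"
  assumes pxy_nonneg: "\<forall>x y. 0 \<le> pxy x y"
    and beta_pos: "beta > 0"
    and q1_cd: "cond_dist q1" and q2_cd: "cond_dist q2"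
    and optimal: "\<forall>r1. cond_dist (r1 :: 'x \<Rightarrow> 't1 \<Rightarrow> real)
                     \<longrightarrow> IB_F pxy beta lam gam q1 q2 \<le> IB_F pxy beta lam gam r1 q2"
    and px_pos: "\<forall>x. px pxy x > 0"
    and q1_pos: "\<forall>x t1. q1 x t1 > 0"
    and q2_pos: "\<forall>x t2. q2 x t2 > 0"
  shows "\<forall>x t1. q1 x t1 =
            pt pxy q1 t1 * exp (E1 pxy beta gam q1 q2 x t1)
            / (\<Sum>t\<in>UNIV. pt pxy q1 t * exp (E1 pxy beta gam q1 q2 x t))"
proof (intro allI)
  fix x t1
  have pt1_pos: "pt pxy q1 t > 0" for t
  proof -
    have "px pxy x * q1 x t \<le> pt pxy q1 t" unfolding pt_def using px_pos q1_pos
      by (intro member_le_sum) (auto intro!: mult_nonneg_nonneg simp: less_imp_le)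
    moreover have "px pxy x * q1 x t > 0" using px_pos q1_pos by simp
    ultimately show ?thesis by linarith
  qed
  define L where "L t = ln (q1 x t) - ln (pt pxy q1 t) - E1 pxy beta gam q1 q2 x t" for t
  define K where "K = gam * (\<Sum>t2\<in>UNIV. px pxy x * q2 x t2 * (ln (q2 x t2) - ln (pt pxy q2 t2)))
      - (\<Sum>y\<in>UNIV. if pxy x y = 0 then 0 else pxy x y * (ln (py_x pxy x y) - ln (\<Sum>t'\<in>UNIV. pyt pxy q1 q2 y t')))"
  have HL: "HH pxy beta gam q1 q2 x t = beta * px pxy x * L t + K" for t
    unfolding HH_E1[OF assms(1-4) assms(6-8)] L_def K_def by (simp add: algebra_simps)
  have Lc: "L t = L t1" for t
  proof -
    have "HH pxy beta gam q1 q2 x t = HH pxy beta gam q1 q2 x t1"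
      by (rule stat[OF pxy_nonneg q1_cd optimal px_pos q1_pos q2_pos])
    then have "beta * px pxy x * L t = beta * px pxy x * L t1" unfolding HL by simp
    then show ?thesis using beta_pos px_pos[rule_format, of x] by simp
  qed
  have qe: "q1 x t = pt pxy q1 t * exp (E1 pxy beta gam q1 q2 x t) * exp (L t1)" for t
  proof -
    have "exp (L t) = q1 x t / pt pxy q1 t / exp (E1 pxy beta gam q1 q2 x t)"
      unfolding L_def using q1_pos[rule_format, of x t] pt1_pos[of t] by (simp add: exp_diff)
    then show ?thesis using Lc[of t] pt1_pos[of t] by (simp add: field_simps)
  qed
  have "1 = (\<Sum>t\<in>UNIV. q1 x t)" using q1_cd unfolding cond_dist_def by simp
  also have "\<dots> = (\<Sum>t\<in>UNIV. pt pxy q1 t * exp (E1 pxy beta gam q1 q2 x t)) * exp (L t1)"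
    by (subst qe) (simp add: sum_distrib_right)
  finally have eq: "1 = (\<Sum>t\<in>UNIV. pt pxy q1 t * exp (E1 pxy beta gam q1 q2 x t)) * exp (L t1)" .
  then have "(\<Sum>t\<in>UNIV. pt pxy q1 t * exp (E1 pxy beta gam q1 q2 x t)) \<noteq> 0" by auto
  with eq have "exp (L t1) = 1 / (\<Sum>t\<in>UNIV. pt pxy q1 t * exp (E1 pxy beta gam q1 q2 x t))"
    by (simp add: field_simps)
  then show "q1 x t1 = pt pxy q1 t1 * exp (E1 pxy beta gam q1 q2 x t1)
            / (\<Sum>t\<in>UNIV. pt pxy q1 t * exp (E1 pxy beta gam q1 q2 x t))"
    using qe[of t1] by simp
qed



lemma MI_transpose: "mutual_info (\<lambda>a b. J b a) = mutual_info (J :: 'a::finite \<Rightarrow> 'b::finite \<Rightarrow> real)"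
  unfolding mutual_info_def by (subst sum.swap) (simp add: mult.commute cong: if_cong)

lemma sum_swap_reindex: "(\<Sum>t\<in>UNIV. f (prod.swap t)) = (\<Sum>t\<in>(UNIV::('a::finite\<times>'b::finite) set). f t)"
  using sum.reindex_bij_betw[of prod.swap "UNIV::('b\<times>'a) set" UNIV f] bij_swap by simp

lemma MI_colswap: "mutual_info (\<lambda>y t. J y (prod.swap t)) = mutual_info (J :: 'y::finite \<Rightarrow> ('a::finite \<times> 'b::finite) \<Rightarrow> real)"
proof -
  define g where "g y t = (if J y t = 0 then 0
      else J y t * ln (J y t / ((\<Sum>b'\<in>UNIV. J y b') * (\<Sum>a'\<in>UNIV. J a' t))))" for y t
  have rs: "(\<Sum>b'\<in>UNIV. J y (prod.swap b')) = (\<Sum>b'\<in>UNIV. J y b')" for y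
    by (rule sum_swap_reindex)
  have "mutual_info (\<lambda>y t. J y (prod.swap t)) = (\<Sum>y\<in>UNIV. \<Sum>t\<in>UNIV. g y (prod.swap t))"
    unfolding mutual_info_def g_def rs ..
  also have "\<dots> = (\<Sum>y\<in>UNIV. \<Sum>t\<in>UNIV. g y t)" by (simp only: sum_swap_reindex)
  also have "\<dots> = mutual_info J" unfolding mutual_info_def g_def ..
  finally show ?thesis .
qed

lemma IB_F_swap: "IB_F pxy beta lam gam q1 q2 = IB_F pxy lam beta gam q2 q1"
proof -
  have e1: "pyt pxy q2 q1 = (\<lambda>y t. pyt pxy q1 q2 y (prod.swap t))"
    unfolding pyt_def by (intro ext) (simp add: mult_ac)
  have e2: "pt1t2 pxy q2 q1 = (\<lambda>a b. pt1t2 pxy q1 q2 b a)"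
    unfolding pt1t2_def by (intro ext) (simp add: mult_ac)
  show ?thesis unfolding IB_F_def e1 e2 MI_colswap[of "pyt pxy q1 q2"] MI_transpose[of "pt1t2 pxy q1 q2"] by simp
qed

lemma E2_swap: "E2 pxy lam gam q1 q2 = E1 pxy lam gam q2 q1"
proof -
  have p12: "pt1t2 pxy q2 q1 t2 t1 = pt1t2 pxy q1 q2 t1 t2" for t1 t2
    unfolding pt1t2_def by (simp add: mult_ac)
  have py: "pyt pxy q2 q1 y (t2, t1) = pyt pxy q1 q2 y (t1, t2)" for y t1 t2
    unfolding pyt_def by (simp add: mult_ac)
  have a: "pt2_t1 pxy q2 q1 = pt1_t2 pxy q1 q2"
    unfolding pt2_t1_def pt1_t2_def p12 ..
  have b: "py_t1t2 pxy q2 q1 t2 t1 = py_t1t2 pxy q1 q2 t1 t2" for t1 t2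
    unfolding py_t1t2_def p12 py ..
  show ?thesis unfolding E1_def E2_def a b ..
qed

theorem theorem1:
  fixes pxy :: "'x::finite \<Rightarrow> 'y::finite \<Rightarrow> real"
    and q1 :: "'x \<Rightarrow> 't1::finite \<Rightarrow> real"
    and q2 :: "'x \<Rightarrow> 't2::finite \<Rightarrow> real"
    and beta lam gam :: real
  assumes pxy_nonneg: "\<forall>x y. 0 \<le> pxy x y"
    and pxy_sum: "(\<Sum>x\<in>UNIV. \<Sum>y\<in>UNIV. pxy x y) = 1"
    and beta_pos: "beta > 0" and lam_pos: "lam > 0" and gam_nonneg: "gam \<ge> 0"
    and q1_cd: "cond_dist q1" and q2_cd: "cond_dist q2"
    and optimal: "\<forall>r1 r2. cond_dist (r1 :: 'x \<Rightarrow> 't1 \<Rightarrow> real) \<and> cond_dist (r2 :: 'x \<Rightarrow> 't2 \<Rightarrow> real)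
                     \<longrightarrow> IB_F pxy beta lam gam q1 q2 \<le> IB_F pxy beta lam gam r1 r2"
    and px_pos: "\<forall>x. px pxy x > 0"
    and q1_pos: "\<forall>x t1. q1 x t1 > 0"
    and q2_pos: "\<forall>x t2. q2 x t2 > 0"
  shows "(\<forall>x t1. q1 x t1 =
            pt pxy q1 t1 * exp (E1 pxy beta gam q1 q2 x t1)
            / (\<Sum>t\<in>UNIV. pt pxy q1 t * exp (E1 pxy beta gam q1 q2 x t)))
       \<and> (\<forall>x t2. q2 x t2 =
            pt pxy q2 t2 * exp (E2 pxy lam gam q1 q2 x t2)
            / (\<Sum>t\<in>UNIV. pt pxy q2 t * exp (E2 pxy lam gam q1 q2 x t)))"
  proof (rule conjI)
  have opt1: "\<forall>r1. cond_dist (r1 :: 'x \<Rightarrow> 't1 \<Rightarrow> real)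
      \<longrightarrow> IB_F pxy beta lam gam q1 q2 \<le> IB_F pxy beta lam gam r1 q2"
    using optimal q2_cd by blast
  show "\<forall>x t1. q1 x t1 =
            pt pxy q1 t1 * exp (E1 pxy beta gam q1 q2 x t1)
            / (\<Sum>t\<in>UNIV. pt pxy q1 t * exp (E1 pxy beta gam q1 q2 x t))"
    by (rule half[OF pxy_nonneg beta_pos q1_cd q2_cd opt1 px_pos q1_pos q2_pos])
  have opt2: "\<forall>r1. cond_dist (r1 :: 'x \<Rightarrow> 't2 \<Rightarrow> real)
      \<longrightarrow> IB_F pxy lam beta gam q2 q1 \<le> IB_F pxy lam beta gam r1 q1"
  proof (intro allI impI)
    fix r1 :: "'x \<Rightarrow> 't2 \<Rightarrow> real"
    assume "cond_dist r1"
    then have "IB_F pxy beta lam gam q1 q2 \<le> IB_F pxy beta lam gam q1 r1"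
      using optimal q1_cd by blast
    then show "IB_F pxy lam beta gam q2 q1 \<le> IB_F pxy lam beta gam r1 q1"
      unfolding IB_F_swap[of pxy beta lam gam q1 q2] IB_F_swap[of pxy beta lam gam q1 r1] .
  qed
  show "\<forall>x t2. q2 x t2 =
            pt pxy q2 t2 * exp (E2 pxy lam gam q1 q2 x t2)
            / (\<Sum>t\<in>UNIV. pt pxy q2 t * exp (E2 pxy lam gam q1 q2 x t))"
    unfolding E2_swap
    by (rule half[OF pxy_nonneg lam_pos q2_cd q1_cd opt2 px_pos q2_pos q1_pos])
qed

end
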